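(* Let $G$ be a finite permutation group acting quasi-transitively on a finite set $\Omega$, with constant $t>1$, and suppose $G$ is not transitive on $\Omega$. Let $\Delta_1,\dots,\Delta_r$ ($r>1$) be the $G$-orbits on $\Omega$, fix $\alpha_i\in\Delta_i$ for each $i$, and put $d_i=|G_{\alpha_i}|/t$. Then $d_1\cdot|\Delta_1|=d_i\cdot|\Delta_i|$ for all $i=1,\dots,r$, and the orbit sizes $|\Delta_1|,\dots,|\Delta_r|$ are pairwise distinct.
   Context: A finite permutation group $G$ on a finite set $\Omega$ is called quasi-transitive if there is a natural number $t>1$ such that $|G_{\alpha\beta}|=t$ for all two-element subsets $\{\alpha,\beta\}\subseteq\Omega$, where $G_{\alpha\beta}$ denotes the pointwise stabiliser of $\alpha$ and $\beta$ in $G$, and $G_\alpha$ the stabiliser of $\alpha$. *)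

theory Defs
  imports Complex_Main "HOL-Combinatorics.Permutations"
begin

definition perm_group :: "('a \<Rightarrow> 'a) set \<Rightarrow> 'a set \<Rightarrow> bool" where
  "perm_group G \<Omega> \<longleftrightarrow> finite \<Omega> \<and> id \<in> G \<and> (\<forall>g\<in>G. g permutes \<Omega>)
     \<and> (\<forall>g\<in>G. \<forall>h\<in>G. g \<circ> h \<in> G) \<and> (\<forall>g\<in>G. inv g \<in> G)"

definition stabiliser :: "('a \<Rightarrow> 'a) set \<Rightarrow> 'a \<Rightarrow> ('a \<Rightarrow> 'a) set" where
  "stabiliser G a = {g\<in>G. g a = a}"

definition stabiliser2 :: "('a \<Rightarrow> 'a) set \<Rightarrow> 'a \<Rightarrow> 'a \<Rightarrow> ('a \<Rightarrow> 'a) set" where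
  "stabiliser2 G a b = {g\<in>G. g a = a \<and> g b = b}"

definition orbit_of :: "('a \<Rightarrow> 'a) set \<Rightarrow> 'a \<Rightarrow> 'a set" where
  "orbit_of G a = (\<lambda>g. g a) ` G"

definition quasi_transitive_with :: "('a \<Rightarrow> 'a) set \<Rightarrow> 'a set \<Rightarrow> nat \<Rightarrow> bool" where
  "quasi_transitive_with G \<Omega> t \<longleftrightarrow> t > 1 \<and>
     (\<forall>a\<in>\<Omega>. \<forall>b\<in>\<Omega>. a \<noteq> b \<longrightarrow> card (stabiliser2 G a b) = t)"

definition transitive_on :: "('a \<Rightarrow> 'a) set \<Rightarrow> 'a set \<Rightarrow> bool" where
  "transitive_on G \<Omega> \<longleftrightarrow> (\<forall>a\<in>\<Omega>. \<forall>b\<in>\<Omega>. \<exists>g\<in>G. g a = b)"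

end

theory Submission
  imports Defs
begin

lemma pg_finite: "perm_group G \<Omega> \<Longrightarrow> finite G"
  unfolding perm_group_def
  by (metis (mono_tags, lifting) finite_permutations mem_Collect_eq rev_finite_subset subsetI)

lemma pg_inv_l: "perm_group G \<Omega> \<Longrightarrow> g \<in> G \<Longrightarrow> inv g (g x) = x"
  unfolding perm_group_def by (meson permutes_inverses(2))

lemma pg_inv_r: "perm_group G \<Omega> \<Longrightarrow> g \<in> G \<Longrightarrow> g (inv g x) = x"
  unfolding perm_group_def by (meson permutes_inverses(1))

lemma pg_comp: "perm_group G \<Omega> \<Longrightarrow> g \<in> G \<Longrightarrow> h \<in> G \<Longrightarrow> g \<circ> h \<in> G"
  unfolding perm_group_def by blast

lemma pg_inv: "perm_group G \<Omega> \<Longrightarrow> g \<in> G \<Longrightarrow> inv g \<in> G"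
  unfolding perm_group_def by blast

lemma pg_id: "perm_group G \<Omega> \<Longrightarrow> id \<in> G"
  unfolding perm_group_def by blast

lemma pg_stab: assumes "perm_group G \<Omega>" shows "perm_group (stabiliser G a) \<Omega>"
proof -
  have "inv g \<in> stabiliser G a" if "g \<in> stabiliser G a" for g
    using that pg_inv[OF assms] pg_inv_l[OF assms, of g a] by (auto simp: stabiliser_def)
  then show ?thesis using assms unfolding perm_group_def stabiliser_def by auto
qed

lemma orbit_mem: assumes "perm_group G \<Omega>" shows "x \<in> orbit_of G x"
  unfolding orbit_of_def using pg_id[OF assms] by (metis id_apply image_eqI)

lemma orbit_disj:
  assumes "perm_group G \<Omega>" "orbit_of G x \<inter> orbit_of G y \<noteq> {}"
  shows "orbit_of G x = orbit_of G y"
proof -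
  have sub: "orbit_of G y \<subseteq> orbit_of G x" if zz: "z \<in> orbit_of G x" "z \<in> orbit_of G y" for x y z
  proof
    fix w assume "w \<in> orbit_of G y"
    then obtain h where h: "h \<in> G" "w = h y" by (auto simp: orbit_of_def)
    obtain h1 where h1: "h1 \<in> G" "z = h1 x" using zz(1) unfolding orbit_of_def by blast
    obtain h2 where h2: "h2 \<in> G" "z = h2 y" using zz(2) unfolding orbit_of_def by blast
    have "y = inv h2 z" using pg_inv_l[OF assms(1) h2(1)] h2 by simp
    hence "w = (h \<circ> inv h2 \<circ> h1) x" using h h1 by simp
    moreover have "h \<circ> inv h2 \<circ> h1 \<in> G"
      using pg_comp[OF assms(1)] pg_inv[OF assms(1)] h h1 h2 by blast
    ultimately show "w \<in> orbit_of G x" unfolding orbit_of_def by (metis image_eqI)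
  qed
  from assms(2) obtain z where "z \<in> orbit_of G x" "z \<in> orbit_of G y" by blast
  then show ?thesis using sub by blast
qed

lemma orbit_stab:
  assumes "perm_group G \<Omega>"
  shows "card G = card (stabiliser G x) * card (orbit_of G x)"
proof -
  have fin: "finite G" using pg_finite[OF assms] .
  have eq: "G = (\<Union>y\<in>orbit_of G x. {g\<in>G. g x = y})" by (auto simp: orbit_of_def)
  have fib: "card {g\<in>G. g x = y} = card (stabiliser G x)" if yin: "y \<in> orbit_of G x" for y
  proof -
    obtain g0 where g0: "g0 \<in> G" "y = g0 x" using yin unfolding orbit_of_def by blast
    have "{g\<in>G. g x = y} = (\<lambda>s. g0 \<circ> s) ` stabiliser G x"
    proof
      show "(\<lambda>s. g0 \<circ> s) ` stabiliser G x \<subseteq> {g\<in>G. g x = y}"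
        using g0 pg_comp[OF assms] by (auto simp: stabiliser_def)
      show "{g\<in>G. g x = y} \<subseteq> (\<lambda>s. g0 \<circ> s) ` stabiliser G x"
      proof
        fix g assume g: "g \<in> {g\<in>G. g x = y}"
        have "inv g0 \<circ> g \<in> stabiliser G x"
          using g g0 pg_comp[OF assms] pg_inv[OF assms] pg_inv_l[OF assms g0(1)]
          by (auto simp: stabiliser_def)
        moreover have "g = g0 \<circ> (inv g0 \<circ> g)"
          using pg_inv_r[OF assms g0(1)] by auto
        ultimately show "g \<in> (\<lambda>s. g0 \<circ> s) ` stabiliser G x" by blast
      qed
    qed
    moreover have "inj_on (\<lambda>s. g0 \<circ> s) (stabiliser G x)"
    proof
      fix s1 s2 assume "g0 \<circ> s1 = g0 \<circ> s2"
      hence "\<And>z. g0 (s1 z) = g0 (s2 z)" by (metis comp_apply)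
      hence "\<And>z. s1 z = s2 z" using pg_inv_l[OF assms g0(1)] by metis
      thus "s1 = s2" by auto
    qed
    ultimately show ?thesis by (simp add: card_image)
  qed
  have "card G = (\<Sum>y\<in>orbit_of G x. card {g\<in>G. g x = y})"
    apply (subst eq) apply (rule card_UN_disjoint)
    using fin by (auto simp: orbit_of_def)
  also have "\<dots> = card (orbit_of G x) * card (stabiliser G x)"
    using fib by simp
  finally show ?thesis by simp
qed

lemma partition_card:
  assumes "perm_group H \<Omega>" "finite S" "\<And>y h. y \<in> S \<Longrightarrow> h \<in> H \<Longrightarrow> h y \<in> S"
    "\<And>y. y \<in> S \<Longrightarrow> card (orbit_of H y) = d"
  shows "d dvd card S"
proof -
  let ?C = "orbit_of H ` S"
  have U: "\<Union>?C = S"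
    using assms(3) orbit_mem[OF assms(1)] by (auto simp: orbit_of_def)
  have "d * card ?C = card (\<Union>?C)"
  proof (rule card_partition)
    show "finite ?C" using assms(2) by simp
    show "finite (\<Union>?C)" using U assms(2) by simp
    show "\<And>c. c \<in> ?C \<Longrightarrow> card c = d" using assms(4) by auto
    show "\<And>c1 c2. c1 \<in> ?C \<Longrightarrow> c2 \<in> ?C \<Longrightarrow> c1 \<noteq> c2 \<Longrightarrow> c1 \<inter> c2 = {}"
      using orbit_disj[OF assms(1)] by blast
  qed
  thus ?thesis using U by (metis dvd_triv_left)
qed

theorem mainTheorem2:
  fixes G :: "('a \<Rightarrow> 'a) set" and \<Omega> :: "'a set" and t :: nat
  assumes "perm_group G \<Omega>"
    and "quasi_transitive_with G \<Omega> t"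
    and "\<not> transitive_on G \<Omega>"
  shows "(\<forall>a\<in>\<Omega>. \<forall>b\<in>\<Omega>.
            (real (card (stabiliser G a)) / real t) * real (card (orbit_of G a))
          = (real (card (stabiliser G b)) / real t) * real (card (orbit_of G b)))
       \<and> (\<forall>a\<in>\<Omega>. \<forall>b\<in>\<Omega>. orbit_of G a \<noteq> orbit_of G b
            \<longrightarrow> card (orbit_of G a) \<noteq> card (orbit_of G b))"
proof
  note pg = assms(1)
  have os: "\<And>x. card (stabiliser G x) * card (orbit_of G x) = card G"
    using orbit_stab[OF pg] by simp
  show "\<forall>a\<in>\<Omega>. \<forall>b\<in>\<Omega>.
            (real (card (stabiliser G a)) / real t) * real (card (orbit_of G a))
          = (real (card (stabiliser G b)) / real t) * real (card (orbit_of G b))"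
  proof (intro ballI)
    fix a b
    have "real (card (stabiliser G a)) * real (card (orbit_of G a))
        = real (card (stabiliser G b)) * real (card (orbit_of G b))"
      using arg_cong[OF trans[OF os[of a] sym[OF os[of b]]], of real] by simp
    thus "(real (card (stabiliser G a)) / real t) * real (card (orbit_of G a))
          = (real (card (stabiliser G b)) / real t) * real (card (orbit_of G b))"
      by simp
  qed
  show "\<forall>a\<in>\<Omega>. \<forall>b\<in>\<Omega>. orbit_of G a \<noteq> orbit_of G b
            \<longrightarrow> card (orbit_of G a) \<noteq> card (orbit_of G b)"
  proof (intro ballI impI notI)
    fix a b assume a: "a \<in> \<Omega>" and b: "b \<in> \<Omega>" and ne: "orbit_of G a \<noteq> orbit_of G b"
      and eqc: "card (orbit_of G a) = card (orbit_of G b)"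
    have t1: "t > 1" and qt: "\<And>x y. x \<in> \<Omega> \<Longrightarrow> y \<in> \<Omega> \<Longrightarrow> x \<noteq> y \<Longrightarrow> card (stabiliser2 G x y) = t"
      using assms(2) unfolding quasi_transitive_with_def by auto
    have finG: "finite G" using pg_finite[OF pg] .
    have orbO: "\<And>x h. x \<in> \<Omega> \<Longrightarrow> h \<in> G \<Longrightarrow> h x \<in> \<Omega>"
      using pg unfolding perm_group_def by (meson permutes_in_image)
    have fin_orb: "\<And>x. finite (orbit_of G x)" using finG by (simp add: orbit_of_def)
    have pos: "card (orbit_of G a) > 0" using fin_orb orbit_mem[OF pg] by (metis card_gt_0_iff empty_iff)
    have seq: "card (stabiliser G a) = card (stabiliser G b)"
      using os[of a] os[of b] eqc pos by (metis mult_right_cancel neq0_conv)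
    define H where "H = stabiliser G a"
    have pH: "perm_group H \<Omega>" unfolding H_def using pg_stab[OF pg] .
    have sH: "\<And>x. stabiliser H x = stabiliser2 G a x"
      unfolding H_def stabiliser_def stabiliser2_def by auto
    have HG: "H \<subseteq> G" unfolding H_def stabiliser_def by auto
    have Ha: "\<And>h. h \<in> H \<Longrightarrow> h a = a" unfolding H_def stabiliser_def by auto
    have ab: "a \<noteq> b" using ne by auto
    have oH: "\<And>x. x \<in> \<Omega> \<Longrightarrow> x \<noteq> a \<Longrightarrow> card H = t * card (orbit_of H x)"
      using orbit_stab[OF pH] sH qt a by metis
    define d where "d = card (orbit_of H b)"
    have dall: "\<And>x. x \<in> \<Omega> \<Longrightarrow> x \<noteq> a \<Longrightarrow> card (orbit_of H x) = d"
    proof -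
      fix x assume "x \<in> \<Omega>" "x \<noteq> a"
      then have "t * card (orbit_of H x) = t * d" using oH[of x] oH[OF b] ab unfolding d_def by auto
      then show "card (orbit_of H x) = d" using t1 by simp
    qed
    have orbsub: "\<And>x. x \<in> \<Omega> \<Longrightarrow> orbit_of G x \<subseteq> \<Omega>" using orbO by (auto simp: orbit_of_def)
    have inorb: "\<And>x y h. y \<in> orbit_of G x \<Longrightarrow> h \<in> G \<Longrightarrow> h y \<in> orbit_of G x"
    proof -
      fix x y h assume "y \<in> orbit_of G x" "h \<in> G"
      then obtain g where "g \<in> G" "y = g x" unfolding orbit_of_def by blast
      then have "h y = (h \<circ> g) x" "h \<circ> g \<in> G" using pg_comp[OF pg \<open>h \<in> G\<close>] by auto
      then show "h y \<in> orbit_of G x" unfolding orbit_of_def by (metis image_eqI)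
    qed
    have aout: "a \<notin> orbit_of G b"
      using ne orbit_disj[OF pg, of a b] orbit_mem[OF pg, of a] by blast
    have d1: "d dvd card (orbit_of G b)"
      apply (rule partition_card[OF pH fin_orb])
      using inorb HG apply blast
      using dall aout orbsub b by blast
    have d2: "d dvd card (orbit_of G a - {a})"
    proof (rule partition_card[OF pH])
      show "finite (orbit_of G a - {a})" using fin_orb by simp
      show "h y \<in> orbit_of G a - {a}" if "y \<in> orbit_of G a - {a}" "h \<in> H" for y h
      proof -
        have "h y \<noteq> a"
        proof
          assume "h y = a"
          hence "inv h (h y) = inv h (h a)" using Ha[OF that(2)] by simp
          thus False using pg_inv_l[OF pH that(2)] that(1) by simp
        qed
        thus ?thesis using that inorb HG by blast
      qed
      show "card (orbit_of H y) = d" if "y \<in> orbit_of G a - {a}" for y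
        using that dall orbsub a by blast
    qed
    have "card (orbit_of G a - {a}) = card (orbit_of G a) - 1"
      using orbit_mem[OF pg, of a] fin_orb by simp
    hence "d dvd card (orbit_of G a) - 1" using d2 by simp
    hence "d dvd card (orbit_of G a) - (card (orbit_of G a) - 1)"
      using d1 eqc by (simp add: dvd_diff_nat)
    hence "d dvd 1" using pos by simp
    hence d1': "d = 1" by simp
    have cH: "card H = t" using oH[OF b] ab d1' d_def by simp
    have allfix: "\<And>h x. h \<in> H \<Longrightarrow> h x = x"
    proof -
      fix h x assume h: "h \<in> H"
      show "h x = x"
      proof (cases "x \<in> \<Omega> \<and> x \<noteq> a")
        case True
        have "stabiliser2 G a x \<subseteq> H" unfolding H_def stabiliser_def stabiliser2_def by auto
        moreover have "card (stabiliser2 G a x) = card H" using qt[OF a] True cH by metis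
        moreover have "finite H" using HG finG finite_subset by blast
        ultimately have "stabiliser2 G a x = H" by (metis card_subset_eq)
        thus ?thesis using h unfolding stabiliser2_def by auto
      next
        case False
        then show ?thesis using h Ha HG pg unfolding perm_group_def
          by (metis permutes_not_in subsetD)
      qed
    qed
    have "H \<subseteq> {id}" using allfix by auto
    hence "card H \<le> card {id::'a\<Rightarrow>'a}" by (intro card_mono) auto
    hence "card H \<le> 1" by simp
    thus False using cH t1 by simp
  qed
qed

end
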